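(* Let $\mathcal{A}\in\mathbb{R}^{n\times n\times n}$ and $\mathcal{E}\in\mathbb{R}^{n\times n\times n}$ be such that $\mathcal{A}$ and $\tilde{\mathcal{A}}=\mathcal{A}+\mathcal{E}$ are piezoelectric-type tensors. Then $$\Big[\sqrt{(\lambda_{C\max}(\mathcal{A}))^2+\lambda_{Z\min}(\mathcal{S}_{\tilde{\mathcal{A}}}-\mathcal{S}_{\mathcal{A}})},\ \sqrt{(\lambda_{C\max}(\mathcal{A}))^2+\lambda_{Z\max}(\mathcal{S}_{\tilde{\mathcal{A}}}-\mathcal{S}_{\mathcal{A}})}\Big]\subseteq\big[\lambda_{C\max}(\mathcal{A})-\lambda_{C\max}(\mathcal{E}),\ \lambda_{C\max}(\mathcal{A})+\lambda_{C\max}(\mathcal{E})\big].$$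
   Context: A tensor $\mathcal{A}=(a_{ijk})\in\mathbb{R}^{n\times n\times n}$ is piezoelectric-type if $a_{ijk}=a_{ikj}$ for all $i,j,k$ (so $\mathcal{E}$ is piezoelectric-type too). For such $\mathcal{A}$, $\lambda_{C\max}(\mathcal{A})=\max\{\sum_{i,j,k}a_{ijk}x_iy_jy_k:\ \mathbf{x},\mathbf{y}\in\mathbb{R}^n,\ \mathbf{x}^T\mathbf{x}=\mathbf{y}^T\mathbf{y}=1\}$ is its largest $C$-eigenvalue (a $C$-eigenvalue being a real $\lambda$ with unit $\mathbf{x},\mathbf{y}$ satisfying $\sum_{j,k}a_{ijk}y_jy_k=\lambda x_i$ and $\sum_{j,k}a_{jki}x_jy_k=\lambda y_i$ for all $i$). The symmetric fourth-order tensor $\mathcal{S}_{\mathcal{A}}=(\bar b_{i_1i_2i_3i_4})$ is defined by $\bar b_{i_1i_2i_3i_4}=\frac13(b_{i_1i_2i_3i_4}+b_{i_1i_3i_2i_4}+b_{i_1i_4i_2i_3})$, where $b_{i_1i_2i_3i_4}=\sum_{i=1}^n a_{ii_1i_2}a_{ii_3i_4}$. For a symmetric fourth-order tensor $\mathcal{T}=(t_{i_1i_2i_3i_4})$, a $Z$-eigenvalue is a real $\lambda$ with some $\mathbf{x}\in\mathbb{R}^n$, $\mathbf{x}^T\mathbf{x}=1$, such that $\sum_{i_2,i_3,i_4}t_{ii_2i_3i_4}x_{i_2}x_{i_3}x_{i_4}=\lambda x_i$ for all $i$; $\lambda_{Z\max}(\mathcal{T})$ and $\lambda_{Z\min}(\mathcal{T})$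 denote the largest and smallest $Z$-eigenvalues, which equal respectively the maximum and minimum of $\mathcal{T}\mathbf{x}^4=\sum t_{i_1i_2i_3i_4}x_{i_1}x_{i_2}x_{i_3}x_{i_4}$ over unit vectors $\mathbf{x}\in\mathbb{R}^n$. *)

theory Defs
  imports Complex_Main
begin

text \<open>Third-order tensors in R^{n x n x n} are functions 'n => 'n => 'n => real over a
finite index type 'n (n = CARD('n)); fourth-order tensors analogously.
Vectors in R^n are functions 'n => real.\<close>

type_synonym ('n) tensor3 = "'n \<Rightarrow> 'n \<Rightarrow> 'n \<Rightarrow> real"
type_synonym ('n) tensor4 = "'n \<Rightarrow> 'n \<Rightarrow> 'n \<Rightarrow> 'n \<Rightarrow> real"

definition unit_vec :: "('n::finite \<Rightarrow> real) \<Rightarrow> bool" where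
  "unit_vec x \<longleftrightarrow> (\<Sum>i\<in>UNIV. x i * x i) = 1"

definition piezo_type :: "('n::finite) tensor3 \<Rightarrow> bool" where
  "piezo_type A \<longleftrightarrow> (\<forall>i j k. A i j k = A i k j)"

definition tadd3 :: "('n::finite) tensor3 \<Rightarrow> 'n tensor3 \<Rightarrow> 'n tensor3" where
  "tadd3 A E = (\<lambda>i j k. A i j k + E i j k)"

definition tsub4 :: "('n::finite) tensor4 \<Rightarrow> 'n tensor4 \<Rightarrow> 'n tensor4" where
  "tsub4 S T = (\<lambda>i1 i2 i3 i4. S i1 i2 i3 i4 - T i1 i2 i3 i4)"

definition lambda_Cmax :: "('n::finite) tensor3 \<Rightarrow> real" where
  "lambda_Cmax A = Sup {(\<Sum>i\<in>UNIV. \<Sum>j\<in>UNIV. \<Sum>k\<in>UNIV. A i j k * x i * y j * y k)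
                        | x y. unit_vec x \<and> unit_vec y}"

definition S_of :: "('n::finite) tensor3 \<Rightarrow> 'n tensor4" where
  "S_of A = (let b = (\<lambda>i1 i2 i3 i4. \<Sum>i\<in>UNIV. A i i1 i2 * A i i3 i4) in
     (\<lambda>i1 i2 i3 i4. (b i1 i2 i3 i4 + b i1 i3 i2 i4 + b i1 i4 i2 i3) / 3))"

definition Z_eigenvalue :: "('n::finite) tensor4 \<Rightarrow> real \<Rightarrow> bool" where
  "Z_eigenvalue T lam \<longleftrightarrow> (\<exists>x. unit_vec x \<and>
      (\<forall>i. (\<Sum>i2\<in>UNIV. \<Sum>i3\<in>UNIV. \<Sum>i4\<in>UNIV. T i i2 i3 i4 * x i2 * x i3 * x i4) = lam * x i))"

definition lambda_Zmax :: "('n::finite) tensor4 \<Rightarrow> real" where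
  "lambda_Zmax T = Sup {lam. Z_eigenvalue T lam}"

definition lambda_Zmin :: "('n::finite) tensor4 \<Rightarrow> real" where
  "lambda_Zmin T = Inf {lam. Z_eigenvalue T lam}"

end

theory Submission
  imports Defs "HOL-Analysis.Analysis"
begin


definition Q4 :: "('n::finite \<Rightarrow> 'n \<Rightarrow> 'n \<Rightarrow> 'n \<Rightarrow> real) \<Rightarrow> real" where
  "Q4 f = (\<Sum>a\<in>UNIV. \<Sum>b\<in>UNIV. \<Sum>c\<in>UNIV. \<Sum>d\<in>UNIV. f a b c d)"

lemma Q4_swap12: "Q4 (\<lambda>a b c d. f b a c d) = Q4 f"
  unfolding Q4_def by (rule sum.swap)
lemma Q4_swap23: "Q4 (\<lambda>a b c d. f a c b d) = Q4 f"
  unfolding Q4_def by (rule sum.cong[OF refl], rule sum.swap)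
lemma Q4_swap34: "Q4 (\<lambda>a b c d. f a b d c) = Q4 f"
  unfolding Q4_def by (rule sum.cong[OF refl], rule sum.cong[OF refl], rule sum.swap)
lemma Q4_swap13: "Q4 (\<lambda>a b c d. f c b a d) = Q4 f"
proof -
  have "Q4 (\<lambda>a b c d. f c b a d) = Q4 (\<lambda>a b c d. f c a b d)"
    using Q4_swap12[of "\<lambda>a b c d. f c a b d"] by simp
  also have "\<dots> = Q4 (\<lambda>a b c d. f b a c d)"
    using Q4_swap23[of "\<lambda>a b c d. f b a c d"] by simp
  also have "\<dots> = Q4 f" by (rule Q4_swap12)
  finally show ?thesis .
qed
lemma Q4_swap14: "Q4 (\<lambda>a b c d. f d b c a) = Q4 f"
proof -
  have "Q4 (\<lambda>a b c d. f d b c a) = Q4 (\<lambda>a b c d. f c b d a)"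
    using Q4_swap34[of "\<lambda>a b c d. f c b d a"] by simp
  also have "\<dots> = Q4 (\<lambda>a b c d. f a b d c)"
    using Q4_swap13[of "\<lambda>a b c d. f a b d c"] by simp
  also have "\<dots> = Q4 f" by (rule Q4_swap34)
  finally show ?thesis .
qed
lemma Q4_rot: "Q4 (\<lambda>a b c d. f a d b c) = Q4 f"
proof -
  have "Q4 (\<lambda>a b c d. f a d b c) = Q4 (\<lambda>a b c d. f a c b d)"
    using Q4_swap34[of "\<lambda>a b c d. f a c b d"] by simp
  also have "\<dots> = Q4 f" by (rule Q4_swap23)
  finally show ?thesis .
qed

lemma Q4_add: "Q4 (\<lambda>a b c d. f a b c d + g a b c d) = Q4 f + Q4 g"
  unfolding Q4_def by (simp add: sum.distrib)
lemma Q4_diff: "Q4 (\<lambda>a b c d. f a b c d - g a b c d) = Q4 f - Q4 g"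
  unfolding Q4_def by (simp add: sum_subtractf)
lemma Q4_cmult: "Q4 (\<lambda>a b c d. k * f a b c d) = k * Q4 f"
  unfolding Q4_def by (simp add: sum_distrib_left)
lemma Q4_sum: "Q4 (\<lambda>a b c d. \<Sum>i\<in>UNIV. g i a b c d) = (\<Sum>i\<in>UNIV. Q4 (g i))"
proof -
  have "(\<Sum>a\<in>UNIV. \<Sum>b\<in>UNIV. \<Sum>c\<in>UNIV. \<Sum>d\<in>UNIV. \<Sum>i\<in>UNIV. g i a b c d)
     = (\<Sum>a\<in>UNIV. \<Sum>b\<in>UNIV. \<Sum>c\<in>UNIV. \<Sum>i\<in>UNIV. \<Sum>d\<in>UNIV. g i a b c d)"
    by (intro sum.cong refl) (rule sum.swap)
  also have "\<dots> = (\<Sum>a\<in>UNIV. \<Sum>b\<in>UNIV. \<Sum>i\<in>UNIV. \<Sum>c\<in>UNIV. \<Sum>d\<in>UNIV. g i a b c d)"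
    by (intro sum.cong refl) (rule sum.swap)
  also have "\<dots> = (\<Sum>a\<in>UNIV. \<Sum>i\<in>UNIV. \<Sum>b\<in>UNIV. \<Sum>c\<in>UNIV. \<Sum>d\<in>UNIV. g i a b c d)"
    by (intro sum.cong refl) (rule sum.swap)
  also have "\<dots> = (\<Sum>i\<in>UNIV. \<Sum>a\<in>UNIV. \<Sum>b\<in>UNIV. \<Sum>c\<in>UNIV. \<Sum>d\<in>UNIV. g i a b c d)"
    by (rule sum.swap)
  finally show ?thesis by (simp only: Q4_def)
qed

definition form4 :: "('n::finite) tensor4 \<Rightarrow> ('n \<Rightarrow> real) \<Rightarrow> real" where
  "form4 T x = Q4 (\<lambda>a b c d. T a b c d * x a * x b * x c * x d)"

definition wv :: "('n::finite) tensor3 \<Rightarrow> ('n \<Rightarrow> real) \<Rightarrow> 'n \<Rightarrow> real" where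
  "wv A y i = (\<Sum>j\<in>UNIV. \<Sum>k\<in>UNIV. A i j k * y j * y k)"


definition bb :: "('n::finite) tensor3 \<Rightarrow> 'n tensor4" where
  "bb A p q r s = (\<Sum>i\<in>UNIV. A i p q * A i r s)"

lemma S_of_eq: "S_of A p q r s = (bb A p q r s + bb A p r q s + bb A p s q r) / 3"
  unfolding S_of_def bb_def Let_def by simp

lemma bb_pair: "bb A r s p q = bb A p q r s"
  unfolding bb_def by (simp add: mult.commute)
lemma bb_sw1: assumes "piezo_type A" shows "bb A q p r s = bb A p q r s"
  unfolding bb_def by (intro sum.cong refl) (metis assms piezo_type_def)
lemma bb_sw2: assumes "piezo_type A" shows "bb A p q s r = bb A p q r s"
  unfolding bb_def by (intro sum.cong refl) (metis assms piezo_type_def)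

lemma S_sym12: assumes "piezo_type A" shows "S_of A q p r s = S_of A p q r s"
proof -
  have 1: "bb A q p r s = bb A p q r s" by (rule bb_sw1[OF assms])
  have 2: "bb A q r p s = bb A p s q r" by (rule bb_pair)
  have 3: "bb A q s p r = bb A p r q s" by (rule bb_pair)
  show ?thesis unfolding S_of_eq 1 2 3 by simp
qed
lemma S_sym13: assumes "piezo_type A" shows "S_of A r q p s = S_of A p q r s"
proof -
  have 1: "bb A r q p s = bb A p s q r"
    using bb_pair[of A p s r q] bb_sw2[OF assms, of p s r q] by simp
  have 2: "bb A r p q s = bb A p r q s" by (rule bb_sw1[OF assms])
  have 3: "bb A r s q p = bb A p q r s"
    using bb_pair[of A q p r s] bb_sw1[OF assms, of q p r s] by simp
  show ?thesis unfolding S_of_eq 1 2 3 by simp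
qed
lemma S_sym14: assumes "piezo_type A" shows "S_of A s q r p = S_of A p q r s"
proof -
  have 1: "bb A s q r p = bb A p r q s"
    using bb_pair[of A r p s q] bb_sw1[OF assms, of r p s q] bb_sw2[OF assms, of p r s q] by simp
  have 2: "bb A s r q p = bb A p q r s"
    using bb_pair[of A q p s r] bb_sw1[OF assms, of q p s r] bb_sw2[OF assms, of p q s r] by simp
  have 3: "bb A s p q r = bb A p s q r" by (rule bb_sw1[OF assms])
  show ?thesis unfolding S_of_eq 1 2 3 by simp
qed


lemma Q4_bb: "Q4 (\<lambda>p q r s. bb A p q r s * x p * x q * x r * x s) = (\<Sum>i\<in>UNIV. (wv A x i)^2)"
proof -
  have "Q4 (\<lambda>p q r s. bb A p q r s * x p * x q * x r * x s)
      = Q4 (\<lambda>p q r s. \<Sum>i\<in>UNIV. A i p q * A i r s * x p * x q * x r * x s)"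
    unfolding bb_def by (simp add: sum_distrib_right)
  also have "\<dots> = (\<Sum>i\<in>UNIV. Q4 (\<lambda>p q r s. A i p q * A i r s * x p * x q * x r * x s))"
    by (rule Q4_sum)
  also have "\<dots> = (\<Sum>i\<in>UNIV. (wv A x i)^2)"
  proof (rule sum.cong[OF refl])
    fix i
    show "Q4 (\<lambda>p q r s. A i p q * A i r s * x p * x q * x r * x s) = (wv A x i)^2"
      unfolding Q4_def wv_def power2_eq_square
      unfolding sum_distrib_right
      unfolding sum_distrib_left
      by (simp add: mult_ac)
  qed
  finally show ?thesis .
qed


lemma form4_S: "form4 (S_of A) x = (\<Sum>i\<in>UNIV. (wv A x i)^2)"
proof -
  let ?f = "\<lambda>p q r s. bb A p q r s * x p * x q * x r * x s"
  have "form4 (S_of A) x = Q4 (\<lambda>p q r s. (1/3) * ?f p q r s + ((1/3) * ?f p r q s + (1/3) * ?f p s q r))"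
    unfolding form4_def S_of_eq
    by (rule arg_cong[where f=Q4]) (simp add: fun_eq_iff algebra_simps add_divide_distrib)
  also have "\<dots> = (1/3) * Q4 ?f + ((1/3) * Q4 (\<lambda>p q r s. ?f p r q s) + (1/3) * Q4 (\<lambda>p q r s. ?f p s q r))"
    by (simp only: Q4_add Q4_cmult)
  also have "Q4 (\<lambda>p q r s. ?f p r q s) = Q4 ?f"
    by (rule Q4_swap23)
  also have "Q4 (\<lambda>p q r s. ?f p s q r) = Q4 ?f"
    by (rule Q4_rot)
  finally show ?thesis using Q4_bb[of A x] by simp
qed



definition Cv :: "('n::finite) tensor3 \<Rightarrow> ('n \<Rightarrow> real) \<Rightarrow> ('n \<Rightarrow> real) \<Rightarrow> real" where
  "Cv A x y = (\<Sum>i\<in>UNIV. \<Sum>j\<in>UNIV. \<Sum>k\<in>UNIV. A i j k * x i * y j * y k)"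

lemma Cv_eq: "Cv A x y = (\<Sum>i\<in>UNIV. x i * wv A y i)"
  unfolding Cv_def wv_def by (simp add: sum_distrib_left mult_ac)

lemma unit_ex: "\<exists>x::'n::finite \<Rightarrow> real. unit_vec x"
proof -
  obtain i0 :: 'n where True by blast
  have "unit_vec (\<lambda>i. if i = i0 then 1 else 0)"
    unfolding unit_vec_def by (simp add: if_distrib cong: if_cong)
  then show ?thesis by blast
qed

lemma unit_abs_le1: assumes "unit_vec x" shows "\<bar>x i\<bar> \<le> 1"
proof -
  have "x i * x i \<le> (\<Sum>j\<in>UNIV. x j * x j)"
    by (rule member_le_sum) auto
  then have "x i * x i \<le> 1" using assms unfolding unit_vec_def by simp
  then show ?thesis using abs_square_le_1[of "x i"] by (simp add: power2_eq_square)
qed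

lemma Cv_bound: assumes "unit_vec x" "unit_vec y"
  shows "Cv A x y \<le> (\<Sum>i\<in>UNIV. \<Sum>j\<in>UNIV. \<Sum>k\<in>UNIV. \<bar>A i j k\<bar>)"
  unfolding Cv_def
proof (intro sum_mono)
  fix i j k
  have a1: "\<bar>x i\<bar> \<le> 1" "\<bar>y j\<bar> \<le> 1" "\<bar>y k\<bar> \<le> 1"
    using unit_abs_le1[OF assms(1), of i] unit_abs_le1[OF assms(2), of j] unit_abs_le1[OF assms(2), of k]
    by auto
  have "\<bar>x i\<bar> * \<bar>y j\<bar> \<le> 1" by (rule mult_le_one[OF a1(1) abs_ge_zero a1(2)])
  then have "\<bar>x i\<bar> * \<bar>y j\<bar> * \<bar>y k\<bar> \<le> 1" by (rule mult_le_one[OF _ abs_ge_zero a1(3)])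
  then have "\<bar>A i j k\<bar> * (\<bar>x i\<bar> * \<bar>y j\<bar> * \<bar>y k\<bar>) \<le> \<bar>A i j k\<bar>"
    by (simp add: mult_left_le)
  then show "A i j k * x i * y j * y k \<le> \<bar>A i j k\<bar>"
  proof -
    have "A i j k * x i * y j * y k \<le> \<bar>A i j k * x i * y j * y k\<bar>" by (rule abs_ge_self)
    also have "\<dots> = \<bar>A i j k\<bar> * (\<bar>x i\<bar> * \<bar>y j\<bar> * \<bar>y k\<bar>)" by (simp add: abs_mult)
    finally show ?thesis using \<open>\<bar>A i j k\<bar> * (\<bar>x i\<bar> * \<bar>y j\<bar> * \<bar>y k\<bar>) \<le> \<bar>A i j k\<bar>\<close> by linarith
  qed
qed

lemma Cset_eq: "{(\<Sum>i\<in>UNIV. \<Sum>j\<in>UNIV. \<Sum>k\<in>UNIV. A i j k * x i * y j * y k) | x y. unit_vec x \<and> unit_vec y}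
   = {Cv A x y | x y. unit_vec x \<and> unit_vec y}"
  unfolding Cv_def by simp

lemma cmax_upper: assumes "unit_vec x" "unit_vec y" shows "Cv A x y \<le> lambda_Cmax A"
  unfolding lambda_Cmax_def Cset_eq
proof (rule cSup_upper)
  show "Cv A x y \<in> {Cv A x y |x y. unit_vec x \<and> unit_vec y}" using assms by blast
  show "bdd_above {Cv A x y |x y. unit_vec x \<and> unit_vec y}"
    unfolding bdd_above_def using Cv_bound by blast
qed

lemma unit_neg: "unit_vec x \<Longrightarrow> unit_vec (\<lambda>i. - x i)"
  unfolding unit_vec_def by simp

lemma Cv_neg: "Cv A (\<lambda>i. - x i) y = - Cv A x y"
  unfolding Cv_eq by (simp add: sum_negf)

lemma cmax_nonneg: "0 \<le> lambda_Cmax (A::('n::finite) tensor3)"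
proof -
  obtain x :: "'n \<Rightarrow> real" where x: "unit_vec x" using unit_ex by blast
  have "Cv A x x \<le> lambda_Cmax A" by (rule cmax_upper[OF x x])
  moreover have "- Cv A x x \<le> lambda_Cmax A"
    using cmax_upper[OF unit_neg[OF x] x, of A] by (simp add: Cv_neg)
  ultimately show ?thesis by linarith
qed

lemma L2_sq: "(L2_set w UNIV)^2 = (\<Sum>i\<in>UNIV. (w i)^2)"
  unfolding L2_set_def by (simp add: sum_nonneg)

lemma wv_le: assumes y: "unit_vec y" shows "L2_set (wv A y) UNIV \<le> lambda_Cmax A"
proof (cases "L2_set (wv A y) UNIV = 0")
  case True then show ?thesis using cmax_nonneg by simp
next
  case False
  let ?L = "L2_set (wv A y) UNIV"
  have Lpos: "?L > 0" using False L2_set_nonneg[of "wv A y" UNIV] by linarith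
  define x where "x = (\<lambda>i. wv A y i / ?L)"
  have "(\<Sum>i\<in>UNIV. x i * x i) = (\<Sum>i\<in>UNIV. (wv A y i)^2) / ?L^2"
    unfolding x_def by (simp add: power2_eq_square sum_divide_distrib)
  also have "\<dots> = 1" unfolding L2_sq[symmetric] using Lpos by simp
  finally have ux: "unit_vec x" unfolding unit_vec_def .
  have "Cv A x y = (\<Sum>i\<in>UNIV. (wv A y i)^2) / ?L"
    unfolding Cv_eq x_def by (simp add: power2_eq_square sum_divide_distrib)
  also have "\<dots> = ?L" unfolding L2_sq[symmetric] using Lpos by (simp add: power2_eq_square)
  finally show ?thesis using cmax_upper[OF ux y, of A] by simp
qed



lemma wv_add: "wv (tadd3 A E) y = (\<lambda>i. wv A y i + wv E y i)"
  unfolding wv_def tadd3_def by (simp add: fun_eq_iff algebra_simps sum.distrib)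

lemma form4_sub: "form4 (tsub4 S T) x = form4 S x - form4 T x"
  unfolding form4_def tsub4_def by (simp add: Q4_diff[symmetric] algebra_simps)

lemma L2_neg: "L2_set (\<lambda>i. - f i) A = L2_set f A"
  unfolding L2_set_def by simp

lemma arith_bounds:
  fixes s t r c e :: real
  assumes "0 \<le> s" "0 \<le> t" "0 \<le> r" "s \<le> t + r" "t \<le> s + r" "r \<le> e" "t \<le> c"
  shows "s^2 - t^2 \<le> 2*e*c + e^2" and "s^2 - t^2 \<ge> (max (c - e) 0)^2 - c^2"
proof -
  have "s \<le> t + e" using assms by linarith
  then have "s^2 \<le> (t+e)^2" using assms by (intro power_mono) auto
  moreover have "t * e \<le> c * e" using assms by (intro mult_right_mono) auto
  ultimately show "s^2 - t^2 \<le> 2*e*c + e^2" by (simp add: power2_eq_square algebra_simps)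
next
  show "s^2 - t^2 \<ge> (max (c - e) 0)^2 - c^2"
  proof (cases "t \<ge> e")
    case True
    have "t - e \<le> s" using assms by linarith
    then have "(t-e)^2 \<le> s^2" using True by (intro power_mono) auto
    moreover have "e \<le> c" using True assms by linarith
    moreover have "t * e \<le> c * e" using assms by (intro mult_right_mono) auto
    ultimately have h: "t * t - 2 * t * e + e * e \<le> s * s" "e \<le> c" "t * e \<le> c * e"
      by (simp_all add: power2_eq_square algebra_simps)
    have m: "max (c - e) 0 = c - e" using h(2) by simp
    have "(c-e) * (c-e) - c * c = e * e - 2 * c * e" by (simp add: algebra_simps)
    then show ?thesis unfolding m power2_eq_square using h by linarith
  next
    case False
    have "0 \<le> s^2" by simp
    show ?thesis
    proof (cases "c \<ge> e")
      case True
      have "t*t \<le> e*e" using False assms by (intro mult_mono) auto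
      moreover have "e*e \<le> c*e" using True assms by (intro mult_right_mono) auto
      moreover have "(c - e) * (c - e) - c * c = e * e - 2 * c * e" by (simp add: algebra_simps)
      moreover have "0 \<le> s * s" by simp
      moreover have m: "max (c - e) 0 = c - e" using True by simp
      ultimately show ?thesis unfolding power2_eq_square m by linarith
    next
      case False
      have "t*t \<le> c*c" using assms by (intro mult_mono) auto
      moreover have "0 \<le> s * s" by simp
      moreover have m: "max (c - e) 0 = 0" using False by simp
      ultimately show ?thesis unfolding power2_eq_square m by linarith
    qed
  qed
qed

lemma form_bounds:
  fixes A E :: "('n::finite) tensor3"
  assumes x: "unit_vec x"
  defines "T \<equiv> tsub4 (S_of (tadd3 A E)) (S_of A)"
  shows "form4 T x \<le> 2 * lambda_Cmax E * lambda_Cmax A + (lambda_Cmax E)^2"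
    and "form4 T x \<ge> (max (lambda_Cmax A - lambda_Cmax E) 0)^2 - (lambda_Cmax A)^2"
proof -
  let ?s = "L2_set (wv (tadd3 A E) x) UNIV"
  let ?t = "L2_set (wv A x) UNIV"
  let ?r = "L2_set (wv E x) UNIV"
  have f: "form4 T x = ?s^2 - ?t^2"
    unfolding T_def form4_sub form4_S L2_sq ..
  have st: "?s \<le> ?t + ?r" unfolding wv_add by (rule L2_set_triangle_ineq)
  have "?t = L2_set (\<lambda>i. wv (tadd3 A E) x i + (- wv E x i)) UNIV"
    unfolding wv_add by simp
  also have "\<dots> \<le> ?s + L2_set (\<lambda>i. - wv E x i) UNIV" by (rule L2_set_triangle_ineq)
  finally have ts: "?t \<le> ?s + ?r" unfolding L2_neg .
  have b: "0 \<le> ?s" "0 \<le> ?t" "0 \<le> ?r" by (simp_all add: L2_set_nonneg)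
  show "form4 T x \<le> 2 * lambda_Cmax E * lambda_Cmax A + (lambda_Cmax E)^2"
    unfolding f by (rule arith_bounds(1)[OF b st ts wv_le[OF x] wv_le[OF x]])
  show "form4 T x \<ge> (max (lambda_Cmax A - lambda_Cmax E) 0)^2 - (lambda_Cmax A)^2"
    unfolding f by (rule arith_bounds(2)[OF b st ts wv_le[OF x] wv_le[OF x]])
qed

lemma Zeig_form: assumes "Z_eigenvalue T lam" shows "\<exists>x. unit_vec x \<and> lam = form4 T x"
proof -
  obtain x where x: "unit_vec x" and ev: "\<And>i. (\<Sum>b\<in>UNIV. \<Sum>c\<in>UNIV. \<Sum>d\<in>UNIV. T i b c d * x b * x c * x d) = lam * x i"
    using assms unfolding Z_eigenvalue_def by blast
  have "form4 T x = (\<Sum>a\<in>UNIV. x a * (\<Sum>b\<in>UNIV. \<Sum>c\<in>UNIV. \<Sum>d\<in>UNIV. T a b c d * x b * x c * x d))"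
    unfolding form4_def Q4_def by (simp add: sum_distrib_left mult_ac)
  also have "\<dots> = (\<Sum>a\<in>UNIV. x a * (lam * x a))" by (simp only: ev)
  also have "\<dots> = (\<Sum>a\<in>UNIV. lam * (x a * x a))" by (simp add: mult_ac)
  also have "\<dots> = lam" using x unfolding unit_vec_def by (simp add: sum_distrib_left[symmetric])
  finally show ?thesis using x by auto
qed



lemma unit_vec_norm: "unit_vec x \<longleftrightarrow> norm (vec_lambda x :: real^'n::finite) = 1"
proof -
  have "norm (vec_lambda x :: real^'n) = sqrt (\<Sum>i\<in>UNIV. x i * x i)"
    unfolding norm_vec_def L2_set_def by (simp add: power2_eq_square)
  then show ?thesis unfolding unit_vec_def by simp
qed

lemma exists_max:
  fixes T :: "('n::finite) tensor4"
  shows "\<exists>x0. unit_vec x0 \<and> (\<forall>x. unit_vec x \<longrightarrow> form4 T x \<le> form4 T x0)"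
proof -
  let ?F = "\<lambda>z::real^'n. form4 T (vec_nth z)"
  have c: "continuous_on (sphere 0 1) ?F"
    unfolding form4_def Q4_def by (intro continuous_intros)
  have "compact (sphere (0::real^'n) 1)" by simp
  moreover have "sphere (0::real^'n) 1 \<noteq> {}" by simp
  ultimately obtain z0 where z0: "z0 \<in> sphere 0 1" "\<forall>y\<in>sphere 0 1. ?F y \<le> ?F z0"
    using continuous_attains_sup[OF _ _ c] by blast
  have u: "unit_vec (vec_nth z0)" unfolding unit_vec_norm using z0(1) by simp
  have "form4 T x \<le> form4 T (vec_nth z0)" if "unit_vec x" for x
  proof -
    have e: "vec_nth (vec_lambda x :: real^'n) = x" by (simp add: fun_eq_iff)
    show ?thesis using z0(2)[rule_format, of "vec_lambda x"] that unfolding unit_vec_norm e by simp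
  qed
  then show ?thesis using u by blast
qed

lemma form4_scale: "form4 T (\<lambda>i. k * u i) = k^4 * form4 T u"
  unfolding form4_def Q4_def by (simp add: sum_distrib_left power4_eq_xxxx mult_ac)

lemma DERIV_Q4:
  assumes "\<And>a b c d. ((\<lambda>e. f e a b c d) has_field_derivative f' a b c d) F"
  shows "((\<lambda>e. Q4 (f e)) has_field_derivative Q4 f') F"
  unfolding Q4_def by (intro DERIV_sum assms)

lemma d4: "((\<lambda>e::real. k * (xa + e * va) * (xb + e * vb) * (xc + e * vc) * (xd + e * vd)) has_field_derivative
   k * (va * xb * xc * xd + xa * vb * xc * xd + xa * xb * vc * xd + xa * xb * xc * vd)) (at 0)"
  by (auto intro!: derivative_eq_intros simp: algebra_simps)

lemma dsq: "((\<lambda>e. (\<Sum>j\<in>UNIV. (x j + e * v j)^2)^2) has_field_derivative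
   2 * (\<Sum>j\<in>UNIV. (x j)^2) * (\<Sum>j\<in>UNIV. 2 * x j * v j)) (at 0)"
  by (auto intro!: derivative_eq_intros simp: algebra_simps)



lemma zexist:
  fixes T :: "('n::finite) tensor4"
  assumes s12: "\<And>a b c d. T b a c d = T a b c d"
    and s13: "\<And>a b c d. T c b a d = T a b c d"
    and s14: "\<And>a b c d. T d b c a = T a b c d"
  shows "\<exists>lam. Z_eigenvalue T lam"
proof -
  obtain x where x: "unit_vec x" and mx: "\<And>y. unit_vec y \<Longrightarrow> form4 T y \<le> form4 T x"
    using exists_max[of T] by blast
  define mu where "mu = form4 T x"
  have x1: "(\<Sum>j\<in>UNIV. (x j)^2) = 1" using x unfolding unit_vec_def by (simp add: power2_eq_square)
  have hom: "form4 T y \<le> mu * (\<Sum>j\<in>UNIV. (y j)^2)^2" for y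
  proof (cases "(\<Sum>j\<in>UNIV. (y j)^2) = 0")
    case True
    then have "\<forall>j. y j = 0" by (simp add: sum_nonneg_eq_0_iff)
    then have "y = (\<lambda>_. 0)" by auto
    then show ?thesis using True by (simp add: form4_def Q4_def)
  next
    case False
    define N where "N = (\<Sum>j\<in>UNIV. (y j)^2)"
    have Npos: "N > 0" using False sum_nonneg[of UNIV "\<lambda>j. (y j)^2"] unfolding N_def by force
    define k where "k = sqrt N"
    have kpos: "k > 0" using Npos unfolding k_def by simp
    have k2: "k^2 = N" unfolding k_def using Npos by simp
    define u where "u = (\<lambda>i. y i / k)"
    have "(\<Sum>i\<in>UNIV. u i * u i) = N / k^2"
      unfolding u_def N_def by (simp add: power2_eq_square sum_divide_distrib)
    then have uu: "unit_vec u" unfolding unit_vec_def k2 using Npos by simp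
    have yk: "y = (\<lambda>i. k * u i)" unfolding u_def using kpos by (simp add: fun_eq_iff)
    have "form4 T y = k^4 * form4 T u" unfolding yk by (rule form4_scale)
    also have "\<dots> \<le> k^4 * mu" unfolding mu_def using mx[OF uu] kpos by simp
    also have "k^4 = N^2" using k2 by (metis power2_eq_square power4_eq_xxxx mult.assoc)
    finally show ?thesis unfolding N_def by (simp add: mult.commute)
  qed
  have ev: "(\<Sum>b\<in>UNIV. \<Sum>c\<in>UNIV. \<Sum>d\<in>UNIV. T i b c d * x b * x c * x d) = mu * x i" for i
  proof -
    define v :: "'n \<Rightarrow> real" where "v = (\<lambda>j. if j = i then 1 else 0)"
    define G where "G = (\<lambda>a. \<Sum>b\<in>UNIV. \<Sum>c\<in>UNIV. \<Sum>d\<in>UNIV. T a b c d * x b * x c * x d)"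
    define F where "F = (\<lambda>e. form4 T (\<lambda>j. x j + e * v j) - mu * (\<Sum>j\<in>UNIV. (x j + e * v j)^2)^2)"
    let ?P1 = "Q4 (\<lambda>a b c d. T a b c d * v a * x b * x c * x d)"
    let ?D = "Q4 (\<lambda>a b c d. T a b c d * (v a * x b * x c * x d + x a * v b * x c * x d + x a * x b * v c * x d + x a * x b * x c * v d))
              - mu * (2 * (\<Sum>j\<in>UNIV. (x j)^2) * (\<Sum>j\<in>UNIV. 2 * x j * v j))"
    have dF: "(F has_field_derivative ?D) (at 0)"
      unfolding F_def form4_def
      by (intro DERIV_diff DERIV_cmult DERIV_Q4 d4 dsq)
    have "?D = 0"
    proof (rule DERIV_local_max[OF dF, of 1])
      show "\<forall>y. \<bar>0 - y\<bar> < 1 \<longrightarrow> F y \<le> F 0"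
      proof (intro allI impI)
        fix y :: real
        have "F y \<le> 0" unfolding F_def using hom[of "\<lambda>j. x j + y * v j"] by simp
        moreover have "F 0 = 0" unfolding F_def mu_def using x1 by simp
        ultimately show "F y \<le> F 0" by simp
      qed
    qed simp
    have P1: "?P1 = G i"
    proof -
      have "?P1 = (\<Sum>a\<in>UNIV. v a * G a)"
        unfolding Q4_def G_def by (simp add: sum_distrib_left mult_ac)
      also have "(\<lambda>a. v a * G a) = (\<lambda>a. if a = i then G a else 0)"
        unfolding v_def by (simp add: fun_eq_iff)
      also have "(\<Sum>a\<in>UNIV. if a = i then G a else 0) = G i" by (simp add: sum.delta)
      finally show ?thesis .
    qed
    have P2: "Q4 (\<lambda>a b c d. T a b c d * x a * v b * x c * x d) = ?P1"
    proof -
      have "Q4 (\<lambda>a b c d. T a b c d * x a * v b * x c * x d) = Q4 (\<lambda>a b c d. T b a c d * x b * v a * x c * x d)"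
        using Q4_swap12[of "\<lambda>a b c d. T a b c d * x a * v b * x c * x d"] by simp
      also have "\<dots> = ?P1"
        by (intro arg_cong[where f=Q4] ext) (simp add: s12 mult_ac)
      finally show ?thesis .
    qed
    have P3: "Q4 (\<lambda>a b c d. T a b c d * x a * x b * v c * x d) = ?P1"
    proof -
      have "Q4 (\<lambda>a b c d. T a b c d * x a * x b * v c * x d) = Q4 (\<lambda>a b c d. T c b a d * x c * x b * v a * x d)"
        using Q4_swap13[of "\<lambda>a b c d. T a b c d * x a * x b * v c * x d"] by simp
      also have "\<dots> = ?P1"
        by (intro arg_cong[where f=Q4] ext) (simp add: s13 mult_ac)
      finally show ?thesis .
    qed
    have P4: "Q4 (\<lambda>a b c d. T a b c d * x a * x b * x c * v d) = ?P1"
    proof -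
      have "Q4 (\<lambda>a b c d. T a b c d * x a * x b * x c * v d) = Q4 (\<lambda>a b c d. T d b c a * x d * x b * x c * v a)"
        using Q4_swap14[of "\<lambda>a b c d. T a b c d * x a * x b * x c * v d"] by simp
      also have "\<dots> = ?P1"
        by (intro arg_cong[where f=Q4] ext) (simp add: s14 mult_ac)
      finally show ?thesis .
    qed
    have Qs: "Q4 (\<lambda>a b c d. T a b c d * (v a * x b * x c * x d + x a * v b * x c * x d + x a * x b * v c * x d + x a * x b * x c * v d))
       = ?P1 + Q4 (\<lambda>a b c d. T a b c d * x a * v b * x c * x d) + Q4 (\<lambda>a b c d. T a b c d * x a * x b * v c * x d)
         + Q4 (\<lambda>a b c d. T a b c d * x a * x b * x c * v d)"
      by (simp only: Q4_add[symmetric] distrib_left mult.assoc)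
    have "(\<Sum>j\<in>UNIV. 2 * x j * v j) = (\<Sum>j\<in>UNIV. if j = i then 2 * x j else 0)"
      unfolding v_def by (rule sum.cong) auto
    then have sv: "(\<Sum>j\<in>UNIV. 2 * x j * v j) = 2 * x i" by (simp add: sum.delta)
    have "?D = 4 * G i - 4 * mu * x i"
      unfolding Qs P2 P3 P4 P1 sv x1 by simp
    with \<open>?D = 0\<close> show ?thesis unfolding G_def by simp
  qed
  show ?thesis unfolding Z_eigenvalue_def using x ev by blast
qed



theorem theorem2p3:
  fixes A E :: "('n::finite) tensor3"
  assumes "piezo_type A" and "piezo_type (tadd3 A E)"
  shows "{sqrt ((lambda_Cmax A)\<^sup>2 + lambda_Zmin (tsub4 (S_of (tadd3 A E)) (S_of A))) ..
          sqrt ((lambda_Cmax A)\<^sup>2 + lambda_Zmax (tsub4 (S_of (tadd3 A E)) (S_of A)))}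
         \<subseteq> {lambda_Cmax A - lambda_Cmax E .. lambda_Cmax A + lambda_Cmax E}"
proof -
  define T where "T = tsub4 (S_of (tadd3 A E)) (S_of A)"
  define c where "c = lambda_Cmax A"
  define e where "e = lambda_Cmax E"
  define \<Lambda> where "\<Lambda> = {lam. Z_eigenvalue T lam}"
  have c0: "0 \<le> c" unfolding c_def by (rule cmax_nonneg)
  have e0: "0 \<le> e" unfolding e_def by (rule cmax_nonneg)
  have "\<exists>lam. Z_eigenvalue T lam"
  proof (rule zexist)
    fix a b c d
    show "T b a c d = T a b c d" unfolding T_def tsub4_def
      using S_sym12[OF assms(1)] S_sym12[OF assms(2)] by simp
    show "T c b a d = T a b c d" unfolding T_def tsub4_def
      using S_sym13[OF assms(1)] S_sym13[OF assms(2)] by simp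
    show "T d b c a = T a b c d" unfolding T_def tsub4_def
      using S_sym14[OF assms(1)] S_sym14[OF assms(2)] by simp
  qed
  then have ne: "\<Lambda> \<noteq> {}" unfolding \<Lambda>_def by blast
  have bnd: "(max (c - e) 0)^2 - c^2 \<le> lam \<and> lam \<le> 2 * e * c + e^2" if l: "lam \<in> \<Lambda>" for lam
  proof -
    obtain x where x: "unit_vec x" "lam = form4 T x"
      using Zeig_form[of T lam] l unfolding \<Lambda>_def by blast
    show ?thesis using form_bounds[OF x(1), of A E] x(2) unfolding T_def c_def e_def by simp
  qed
  have zmax: "lambda_Zmax T \<le> 2 * e * c + e^2"
    unfolding lambda_Zmax_def \<Lambda>_def[symmetric] using ne bnd by (intro cSup_least) auto
  have zmin: "(max (c - e) 0)^2 - c^2 \<le> lambda_Zmin T"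
    unfolding lambda_Zmin_def \<Lambda>_def[symmetric] using ne bnd by (intro cInf_greatest) auto
  have up: "sqrt (c^2 + lambda_Zmax T) \<le> c + e"
  proof -
    have "sqrt (c^2 + lambda_Zmax T) \<le> sqrt ((c + e)^2)"
      using zmax by (intro real_sqrt_le_mono) (simp add: power2_eq_square algebra_simps)
    also have "\<dots> = c + e" using c0 e0 by simp
    finally show ?thesis .
  qed
  have lo: "c - e \<le> sqrt (c^2 + lambda_Zmin T)"
  proof -
    have "c - e \<le> max (c - e) 0" by simp
    also have "\<dots> = sqrt ((max (c - e) 0)^2)" by simp
    also have "\<dots> \<le> sqrt (c^2 + lambda_Zmin T)"
      using zmin by (intro real_sqrt_le_mono) simp
    finally show ?thesis .
  qed
  show ?thesis using up lo unfolding T_def c_def e_def by auto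
qed

end
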